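(* For all integers $v\geq 1$ and $r\geq 1$, $$\sum_{i=1}^{2v-2}2^{i-1}\binom{2r+i-1}{i}\sigma(2v-i,2r+i)+2^{2v-1}\sum_{j=0}^{2r-2}(-1)^j\binom{2v+j-1}{j}\lambda(2v+j)\lambda(2r-j)$$ $$-2^{2v-3}\binom{2v+2r-2}{2v-1}(2v+2r-1)\lambda(2v+2r)+2^{2v-2}\binom{2v+2r-2}{2v-1}\sum_{j=1}^{r+v-2}\lambda(2j+1)\lambda(2r+2v-2j-1)=0,$$ where an empty sum equals $0$.
   Context: For integers $t\geq 1$, $n\geq 1$ let $S_n^{(t)}=\sum_{k=1}^{n}\frac{1}{(2k-1)^t}$, and for integers $s\geq 2$, $t\geq 1$ let $\sigma(s,t)=\sum_{n\geq 1}\frac{S_n^{(t)}}{n^s}$. For real $s>1$, $\lambda(s)=\sum_{n\geq 1}\frac{1}{(2n-1)^s}$. *)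

theory Defs
  imports "HOL-Analysis.Analysis"
begin

definition Sodd :: "nat \<Rightarrow> nat \<Rightarrow> real" where
  "Sodd n t = (\<Sum>k=1..n. 1 / (2 * real k - 1) ^ t)"

definition sigma_odd :: "nat \<Rightarrow> nat \<Rightarrow> real" where
  "sigma_odd s t = (\<Sum>n. Sodd (Suc n) t / real (Suc n) ^ s)"

definition dlambda :: "real \<Rightarrow> real" where
  "dlambda s = (\<Sum>n. 1 / (2 * real n + 1) powr s)"

end

theory Submission
  imports Defs
begin

lemma choose_aux: assumes q: "q \<ge> 1" shows "((q + p) choose p) = ((q - 1 + p) choose p) + ((p + q - 1) choose q)"
proof (cases p)
  case 0 then show ?thesis using q by simp
next
  case (Suc p')
  obtain q' where q': "q = Suc q'" using q by (cases q) auto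
  define n where "n = q' + p' + 1"
  have e: "(q + p) choose p = (n choose p') + (n choose Suc p')"
  proof -
    have "q + p = Suc n" "p = Suc p'" using Suc q' n_def by auto
    then show ?thesis by (simp only: binomial_Suc_Suc)
  qed
  have e2: "(n choose p') = ((p + q - 1) choose q)"
    using Suc q' n_def by (metis add_Suc_right add_diff_cancel_left' binomial_symmetric diff_Suc_1 le_add1 plus_1_eq_Suc add.commute add.left_commute)
  have e3: "(q - 1 + p) = n" using Suc q' n_def by simp
  show ?thesis using e e2 e3 Suc by simp
qed

lemma Bstep:
  fixes a b :: real
  assumes ab: "a + b = 1" and q: "q \<ge> 1"
  shows "b * (\<Sum>j<p. real ((q+j) choose j) * a^j)
       = (\<Sum>j<p. real ((q-1+j) choose j) * a^j) - real ((p+q-1) choose q) * a^p"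
proof (induction p)
  case 0 then show ?case using q by simp
next
  case (Suc p)
  have c: "real ((q + p) choose p) = real ((q - 1 + p) choose p) + real ((p + q - 1) choose q)"
    using choose_aux[OF q, of p] by simp
  have c2: "((Suc p + q - 1) choose q) = ((q+p) choose p)"
    using q by (metis add.commute add_Suc_right add_diff_cancel_left' binomial_symmetric le_add1 plus_1_eq_Suc)
  have bb: "b = 1 - a" using ab by simp
  have "b * (\<Sum>j<Suc p. real ((q+j) choose j) * a^j) = b * (\<Sum>j<p. real ((q+j) choose j) * a^j) + b * real ((q+p) choose p) * a^p"
    by (simp add: algebra_simps)
  also have "\<dots> = (\<Sum>j<p. real ((q-1+j) choose j) * a^j) - real ((p+q-1) choose q) * a^p + (1-a) * (real ((q - 1 + p) choose p) + real ((p + q - 1) choose q)) * a^p"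
    using Suc.IH c bb by simp
  also have "\<dots> = (\<Sum>j<Suc p. real ((q-1+j) choose j) * a^j) - real ((Suc p+q-1) choose q) * a^(Suc p)"
    unfolding c2 c by (simp add: algebra_simps)
  finally show ?case .
qed

lemma Phi:
  fixes a b :: real
  assumes ab: "a + b = 1" and p: "p \<ge> 1" and q: "q \<ge> 1"
  shows "(\<Sum>i<q. real ((p-1+i) choose i) * a^p * b^i) + (\<Sum>j<p. real ((q-1+j) choose j) * a^j * b^q) = 1"
  using q
proof (induction q rule: dec_induct)
  case base
  have "(1 - a) * (\<Sum>j<p. a^j) = 1 - a^p" by (simp add: one_diff_power_eq)
  moreover have "b * (\<Sum>j<p. a^j) = (\<Sum>j<p. a^j) - a * (\<Sum>j<p. a^j)" proof -
    have "b = 1 - a" using ab by simp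
    then show ?thesis by (simp add: left_diff_distrib)
  qed
  ultimately show ?case by (simp add: sum_distrib_left[symmetric] algebra_simps)
next
  case (step q)
  have B: "b * (\<Sum>j<p. real ((q+j) choose j) * a^j)
       = (\<Sum>j<p. real ((q-1+j) choose j) * a^j) - real ((p+q-1) choose q) * a^p"
    using Bstep[OF ab step(1)] .
  have e1: "(\<Sum>j<p. real ((Suc q-1+j) choose j) * a^j * b^(Suc q)) = b^q * (b * (\<Sum>j<p. real ((q+j) choose j) * a^j))"
    by (simp add: sum_distrib_left algebra_simps)
  have e2: "(\<Sum>j<p. real ((q-1+j) choose j) * a^j * b^q) = b^q * (\<Sum>j<p. real ((q-1+j) choose j) * a^j)"
    by (simp add: sum_distrib_left algebra_simps)
  have e3: "p - 1 + q = p + q - 1" using p by simp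
  have e4: "(\<Sum>i<Suc q. real ((p-1+i) choose i) * a^p * b^i) = (\<Sum>i<q. real ((p-1+i) choose i) * a^p * b^i) + real ((p+q-1) choose q) * a^p * b^q"
    using e3 by simp
  have e5: "b^q * ((\<Sum>j<p. real ((q-1+j) choose j) * a^j) - real ((p+q-1) choose q) * a^p) = (\<Sum>j<p. real ((q-1+j) choose j) * a^j * b^q) - real ((p+q-1) choose q) * a^p * b^q"
    unfolding e2 by (simp add: algebra_simps)
  show ?case using step(3) unfolding e1 B e4 e5 by linarith
qed

lemma aux_t1: "yp > 0 \<Longrightarrow> xp>0 \<Longrightarrow> zi>0 \<Longrightarrow> xi>0 \<Longrightarrow> zr>0 \<Longrightarrow>
   (C::real) * (yp/xp) * (zi/xi) * (1/(yp*(zi*zr))) = C/((xp*xi)*zr)"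
  by (simp add: field_simps)

lemma aux_t2: "yj > 0 \<Longrightarrow> xj>0 \<Longrightarrow> zq>0 \<Longrightarrow> xq>0 \<Longrightarrow> yr>0 \<Longrightarrow>
   (C::real) * (s * yj/xj) * (zq/xq) * (1/((yj*yr)*zq)) = s * C/((xq*xj)*yr)"
  by (simp add: field_simps)

lemma pf:
  fixes x y :: real
  assumes x: "x > 0" and y: "y > 0" and pe: "even p" and p: "p \<ge> 1" and q: "q \<ge> 1"
  shows "1/(y^p*(x+y)^q) = (\<Sum>i<q. real ((p-1+i) choose i)/(x^(p+i)*(x+y)^(q-i)))
          + (\<Sum>j<p. (-1)^j * real ((q-1+j) choose j)/(x^(q+j)*y^(p-j)))"
proof -
  define z where "z = x + y"
  have z: "z > 0" using x y z_def by simp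
  define K where "K = 1/(y^p*z^q)"
  have ab: "(-y/x) + z/x = 1" using x z_def by (simp add: field_simps)
  have P: "(\<Sum>i<q. real ((p-1+i) choose i) * (-y/x)^p * (z/x)^i) + (\<Sum>j<p. real ((q-1+j) choose j) * (-y/x)^j * (z/x)^q) = 1"
    by (rule Phi[OF ab p q])
  have t1: "real ((p-1+i) choose i) * (-y/x)^p * (z/x)^i * K = real ((p-1+i) choose i)/(x^(p+i)*z^(q-i))" if "i < q" for i
  proof -
    have "(-y/x)^p = y^p/x^p" using pe by (simp add: power_divide)
    moreover have "z^q = z^i * z^(q-i)" using that by (simp flip: power_add)
    ultimately show ?thesis unfolding K_def using x y z aux_t1[of "y^p" "x^p" "z^i" "x^i" "z^(q-i)"]
      by (simp add: power_divide power_add)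
  qed
  have t2: "real ((q-1+j) choose j) * (-y/x)^j * (z/x)^q * K = (-1)^j * real ((q-1+j) choose j)/(x^(q+j)*y^(p-j))" if "j < p" for j
  proof -
    have "(-y/x)^j = (-1)^j * y^j/x^j" by (simp add: power_divide power_minus')
    moreover have "y^p = y^j * y^(p-j)" using that by (simp flip: power_add)
    ultimately show ?thesis unfolding K_def using x y z aux_t2[of "y^j" "x^j" "z^q" "x^q" "y^(p-j)"]
      by (simp add: power_divide power_add)
  qed
  have "K = K * ((\<Sum>i<q. real ((p-1+i) choose i) * (-y/x)^p * (z/x)^i) + (\<Sum>j<p. real ((q-1+j) choose j) * (-y/x)^j * (z/x)^q))"
    using P by simp
  also have "\<dots> = (\<Sum>i<q. real ((p-1+i) choose i) * (-y/x)^p * (z/x)^i * K) + (\<Sum>j<p. real ((q-1+j) choose j) * (-y/x)^j * (z/x)^q * K)"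
    by (simp add: sum_distrib_left sum_distrib_right algebra_simps)
  also have "\<dots> = (\<Sum>i<q. real ((p-1+i) choose i)/(x^(p+i)*z^(q-i))) + (\<Sum>j<p. (-1)^j * real ((q-1+j) choose j)/(x^(q+j)*y^(p-j)))"
    using t1 t2 by simp
  finally show ?thesis unfolding K_def z_def .
qed

definition qd :: "nat \<Rightarrow> real" where "qd n = 2 * real n + 1"
lemma qd_pos[simp]: "qd n > 0" by (simp add: qd_def add_nonneg_pos)
lemma qd_nonneg[simp]: "qd n \<ge> 0" using qd_pos[of n] by linarith
lemma qd_add_pos[simp]: "qd a + qd b > 0" using qd_pos[of a] qd_pos[of b] by linarith
lemma qd_ge1: "qd n \<ge> 1" by (simp add: qd_def)
lemma qd_ge_n: "qd n \<ge> real n" by (simp add: qd_def)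
lemma qd_nz[simp]: "qd n \<noteq> 0" using qd_pos[of n] by linarith

lemma has_sum_diff:
  fixes f g :: "'a \<Rightarrow> real"
  assumes "(f has_sum a) A" "(g has_sum b) A"
  shows "((\<lambda>x. f x - g x) has_sum (a - b)) A"
proof -
  have "((\<lambda>x. - g x) has_sum (-b)) A" using has_sum_uminus[where f=g and a="-b" and A=A] assms(2) by simp
  from has_sum_add[OF assms(1) this] show ?thesis by simp
qed

lemma has_sum_sum_fun:
  fixes f :: "'i \<Rightarrow> 'a \<Rightarrow> real"
  assumes "finite I" "\<And>i. i \<in> I \<Longrightarrow> (f i has_sum s i) A"
  shows "((\<lambda>x. \<Sum>i\<in>I. f i x) has_sum (\<Sum>i\<in>I. s i)) A"
  using assms
proof (induction I rule: finite_induct)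
  case empty then show ?case by simp
next
  case (insert i I)
  have "((\<lambda>x. f i x + (\<Sum>i\<in>I. f i x)) has_sum (s i + (\<Sum>i\<in>I. s i))) A"
    using insert by (intro has_sum_add) auto
  then show ?case using insert by simp
qed

lemma lam_has_sum:
  assumes s: "s \<ge> 2"
  shows "((\<lambda>n. 1/qd n^s) has_sum dlambda (real s)) UNIV"
proof -
  have sm: "summable (\<lambda>n. 1/qd n^s)"
  proof (rule summable_comparison_test'[OF inverse_power_summable[OF order.refl, where 'a=real], of 1])
    fix n :: nat assume n: "n \<ge> 1"
    have h1: "qd n ^ 2 \<le> qd n ^ s" using s qd_ge1 by (intro power_increasing) auto
    have h2: "real n ^ 2 \<le> qd n ^ 2" using qd_ge_n[of n] by (intro power_mono) auto
    have "real n ^ 2 \<le> qd n ^ s" using h1 h2 by linarith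
    moreover have "real n ^ 2 > 0" using n by simp
    ultimately show "norm (1/qd n^s) \<le> inverse (real n ^ 2)"
      by (simp add: divide_simps)
  qed
  have "dlambda (real s) = (\<Sum>n. 1/qd n^s)"
    unfolding dlambda_def qd_def by (simp add: powr_realpow add_nonneg_pos)
  then have "(\<lambda>n. 1/qd n^s) sums dlambda (real s)" using sm by (simp add: summable_sums)
  then show ?thesis by (rule sums_nonneg_imp_has_sum) simp
qed

lemma prod_has_sum:
  fixes f g :: "nat \<Rightarrow> real"
  assumes f: "(f has_sum F) UNIV" and g: "(g has_sum G) UNIV"
    and f0: "\<And>a. f a \<ge> 0" and g0: "\<And>b. g b \<ge> 0"
  shows "((\<lambda>(a,b). f a * g b) has_sum (F * G)) UNIV"
proof -
  have fib: "((\<lambda>b. (\<lambda>(a,b). f a * g b) (a, b)) has_sum f a * G) UNIV" for a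
    using has_sum_cmult_right[OF g, of "f a"] by simp
  have out: "((\<lambda>a. f a * G) has_sum F * G) UNIV" using has_sum_cmult_left[OF f] .
  have sm: "(\<lambda>(a,b). f a * g b) summable_on Sigma UNIV (\<lambda>_. UNIV)"
    by (rule summable_on_SigmaI[OF fib]) (use out f0 g0 in \<open>auto simp: summable_on_def\<close>)
  have "((\<lambda>(a,b). f a * g b) has_sum (F * G)) (Sigma UNIV (\<lambda>_. UNIV))"
    by (rule has_sum_SigmaI[OF fib out sm])
  then show ?thesis by simp
qed

lemma lamlam:
  assumes "s \<ge> 2" "t \<ge> 2"
  shows "((\<lambda>(a,b). 1/(qd a^s * qd b^t)) has_sum (dlambda (real s) * dlambda (real t))) UNIV"
  using prod_has_sum[OF lam_has_sum[OF assms(1)] lam_has_sum[OF assms(2)]]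
  by (simp add: less_imp_le)

lemma D_summable: "(\<lambda>(a,b). 1/(qd a^2 * qd b^2)) summable_on UNIV"
  using lamlam[of 2 2] by (auto simp: summable_on_def)

lemma dom_summable:
  fixes f :: "nat \<times> nat \<Rightarrow> real"
  assumes "\<And>a b. 0 \<le> f (a,b)" "\<And>a b. f (a,b) \<le> 1/(qd a^2 * qd b^2)"
  shows "f summable_on UNIV"
  by (rule summable_on_comparison_test[OF D_summable]) (use assms in auto)

lemma Sodd_alt: "Sodd (Suc n) t = (\<Sum>a\<le>n. 1/qd a^t)"
proof -
  have "Sodd (Suc n) t = (\<Sum>k\<in>Suc ` {..n}. 1 / (2 * real k - 1) ^ t)"
    unfolding Sodd_def by (simp add: image_Suc_atMost)
  also have "\<dots> = (\<Sum>a\<le>n. 1/qd a^t)"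
    by (subst sum.reindex) (auto simp: qd_def add.commute)
  finally show ?thesis .
qed

lemma sig_has_sum:
  assumes s: "s \<ge> 2" and t: "t \<ge> 2"
  shows "((\<lambda>(a,b). 1/(qd a^t * (qd a + qd b)^s)) has_sum (sigma_odd s t / 2^s)) UNIV"
proof -
  define f where "f = (\<lambda>(a,b). 1/(qd a^t * (qd a + qd b)^s))"
  have fsum: "f summable_on UNIV"
  proof (rule dom_summable)
    fix a b
    show "0 \<le> f (a,b)" by (simp add: f_def add_nonneg_nonneg)
    have h1: "qd a ^ 2 \<le> qd a ^ t" using t qd_ge1 by (intro power_increasing) auto
    have h2: "qd b ^ 2 \<le> qd b ^ s" using s qd_ge1 by (intro power_increasing) auto
    have h3: "qd b ^ s \<le> (qd a + qd b) ^ s" by (intro power_mono) (auto simp: less_imp_le)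
    have "qd a^2 * qd b^2 \<le> qd a^t * (qd a + qd b)^s"
      using h1 h2 h3 by (intro mult_mono) auto
    then show "f (a,b) \<le> 1/(qd a^2 * qd b^2)" unfolding f_def
      by simp (rule divide_left_mono, auto intro!: mult_pos_pos add_pos_pos)
  qed
  define S where "S = infsum f UNIV"
  have fS: "(f has_sum S) UNIV" using fsum S_def by simp
  define h where "h = (\<lambda>(n,a). f (a, n - a))"
  have hS: "(h has_sum S) (Sigma UNIV (\<lambda>n. {..n}))"
  proof -
    have "(f has_sum S) UNIV = (h has_sum S) (Sigma UNIV (\<lambda>n. {..n}))"
      by (rule has_sum_reindex_bij_witness[where j="\<lambda>(a,b). (a+b,a)" and i="\<lambda>(n,a). (a, n-a)"])
         (auto simp: h_def)
    then show ?thesis using fS by simp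
  qed
  have fib: "((\<lambda>a. h (n,a)) has_sum (\<Sum>a\<le>n. h (n,a))) {..n}" for n
    by (rule has_sum_finite) simp
  have "((\<lambda>n. \<Sum>a\<le>n. h (n,a)) has_sum S) UNIV"
    by (rule has_sum_SigmaD[OF hS fib])
  then have sm: "(\<lambda>n. \<Sum>a\<le>n. h (n,a)) sums S" by (rule has_sum_imp_sums)
  have eq: "(\<Sum>a\<le>n. h (n,a)) = Sodd (Suc n) t / real (Suc n) ^ s / 2^s" for n
  proof -
    have "(\<Sum>a\<le>n. h (n,a)) = (\<Sum>a\<le>n. 1/qd a^t * (1/(2 * real (Suc n))^s))"
    proof (rule sum.cong)
      fix a assume "a \<in> {..n}"
      then have "qd a + qd (n - a) = 2 * real (Suc n)" by (auto simp: qd_def of_nat_diff)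
      then show "h (n,a) = 1/qd a^t * (1/(2 * real (Suc n))^s)" by (simp add: h_def f_def)
    qed simp
    also have "\<dots> = Sodd (Suc n) t * (1/(2 * real (Suc n))^s)"
      by (simp add: Sodd_alt sum_distrib_right sum_divide_distrib)
    also have "\<dots> = Sodd (Suc n) t / real (Suc n) ^ s / 2^s"
    proof -
      have e: "(2 * real (Suc n))^s = 2^s * real (Suc n)^s" by (simp only: power_mult_distrib)
      show ?thesis unfolding e by simp
    qed
    finally show ?thesis .
  qed
  have "(\<lambda>n. Sodd (Suc n) t / real (Suc n) ^ s) sums (S * 2^s)"
    using sums_mult[OF sm, of "2^s"] unfolding eq by (simp add: mult.commute)
  then have "sigma_odd s t = S * 2^s" unfolding sigma_odd_def by (simp add: sums_iff)
  then have "S = sigma_odd s t / 2^s" by simp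
  then show ?thesis using fS unfolding f_def by simp
qed

lemma swap_has_sum:
  fixes f :: "nat \<times> nat \<Rightarrow> real"
  assumes "(f has_sum S) UNIV"
  shows "((\<lambda>(a,b). f (b,a)) has_sum S) UNIV"
  using has_sum_swap[where f=f and S=S and A=UNIV and B=UNIV] assms by simp

lemma aux_E: "xp > 0 \<Longrightarrow> xr > 0 \<Longrightarrow> ym > 0 \<Longrightarrow> yr > 0 \<Longrightarrow>
   (xp::real) * (s * ym) / ((xp*xr)*(ym*yr)) = s/(xr*yr)"
  by (simp add: field_simps)

lemma aux_E2: "x > 0 \<Longrightarrow> y > 0 \<Longrightarrow> X > 0 \<Longrightarrow> Y > 0 \<Longrightarrow>
  1/((x^2*X)*y*(x+y)) + 1/((y^2*Y)*x*(x+y)) = ((x*X) + (y*Y)) / ((x^2*X)*(y^2*Y)*(x+(y::real)))"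
proof -
  assume a: "x > 0" "y > 0" "X > 0" "Y > 0"
  have d: "x + y \<noteq> 0" using a by simp
  have e1: "1/((x^2*X)*y*(x+y)) = (y*Y) / ((x^2*X)*(y^2*Y)*(x+y))" using a d by (simp add: power2_eq_square)
  have e2: "1/((y^2*Y)*x*(x+y)) = (x*X) / ((x^2*X)*(y^2*Y)*(x+y))" using a d by (simp add: power2_eq_square)
  show ?thesis unfolding e1 e2 by (simp add: add_divide_distrib)
qed

lemma E_pt:
  fixes x y :: real
  assumes x: "x > 0" and y: "y > 0" and N: "even N" "N \<ge> 2"
  shows "1/(x^N*y*(x+y)) + 1/(y^N*x*(x+y)) = (\<Sum>p<N-1. (-1)^p * (1/(x^(N-p)*y^(p+2))))"
proof -
  define k where "k = N - 2"
  have Nk: "N = k + 2" and ek: "even k" using N k_def by auto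
  have mk: "(-y)^(Suc k) = - (y^(Suc k))" using ek by simp
  have P: "x^(Suc k) + y^(Suc k) = (x+y) * (\<Sum>p<Suc k. x^p * (-y)^(k-p))"
  proof -
    have "(-y)^k = y^k" using ek by simp
    then show ?thesis using diff_power_eq_sum[of x k "-y"] mk by simp
  qed
  have L: "1/(x^N*y*(x+y)) + 1/(y^N*x*(x+y)) = (x^(Suc k) + y^(Suc k)) / (x^N*y^N*(x+y))"
  proof -
    have "x^N = x^2*x^k" "y^N = y^2*y^k" unfolding Nk by (simp_all add: power_add power2_eq_square)
    then show ?thesis using x y aux_E2[of x y "x^k" "y^k"] by (simp add: mult.commute)
  qed
  also have "\<dots> = (\<Sum>p<Suc k. x^p * (-y)^(k-p)) / (x^N*y^N)"
    unfolding P using x y by simp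
  also have "\<dots> = (\<Sum>p<Suc k. x^p * (-y)^(k-p) / (x^N*y^N))"
    by (rule sum_divide_distrib)
  also have "\<dots> = (\<Sum>p<N-1. (-1)^p * (1/(x^(N-p)*y^(p+2))))"
  proof -
    have "Suc k = N - 1" using Nk by simp
    moreover have "x^p * (-y)^(k-p) / (x^N*y^N) = (-1)^p * (1/(x^(N-p)*y^(p+2)))" if "p < Suc k" for p
    proof -
      have s: "(-1::real)^(k-p) = (-1)^p"
      proof -
        have "even (k - p) \<longleftrightarrow> even p" using that ek by (simp add: even_diff_nat)
        then show ?thesis by (simp add: minus_one_power_iff)
      qed
      have a1: "(-y)^(k-p) = (-1)^p * y^(k-p)" using s by (simp add: power_minus')
      have a2: "x^N = x^p * x^(N-p)" using that Nk by (simp flip: power_add)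
      have a3: "y^N = y^(k-p) * y^(p+2)" using that Nk by (simp flip: power_add)
      show ?thesis unfolding a1 a2 a3 using x y aux_E[of "x^p" "x^(N-p)" "y^(k-p)" "y^(p+2)" "(-1)^p"]
        by simp
    qed
    ultimately show ?thesis by (intro sum.cong) auto
  qed
  finally show ?thesis .
qed

lemma E_has_sum:
  assumes N: "even N" "N \<ge> 2"
  shows "((\<lambda>(a,b). 1/(qd a^N* qd b*(qd a + qd b))) has_sum
     ((\<Sum>p<N-1. (-1)^p * (dlambda (real (N-p)) * dlambda (real (p+2)))) / 2)) UNIV"
proof -
  define f where "f = (\<lambda>(a,b). 1/(qd a^N* qd b*(qd a + qd b)))"
  have fsum: "f summable_on UNIV"
  proof (rule dom_summable)
    fix a b
    show "0 \<le> f (a,b)" by (simp add: f_def)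
    have h1: "qd a ^ 2 \<le> qd a ^ N" using N qd_ge1 by (intro power_increasing) auto
    have h2: "qd b ^ 2 \<le> qd b * (qd a + qd b)" using qd_pos[of a] qd_pos[of b]
      by (simp add: power2_eq_square)
    have "qd a^2 * qd b^2 \<le> qd a^N * (qd b * (qd a + qd b))"
      using h1 h2 by (intro mult_mono) auto
    then show "f (a,b) \<le> 1/(qd a^2 * qd b^2)" unfolding f_def
      by (simp add: mult.assoc) (rule divide_left_mono, auto intro!: mult_pos_pos)
  qed
  define S where "S = infsum f UNIV"
  have fS: "(f has_sum S) UNIV" using fsum S_def by simp
  have gS: "((\<lambda>(a,b). f (b,a)) has_sum S) UNIV" by (rule swap_has_sum[OF fS])
  have hS: "((\<lambda>ab. f ab + (\<lambda>(a,b). f (b,a)) ab) has_sum (S + S)) UNIV"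
    by (rule has_sum_add[OF fS gS])
  have eq: "f ab + (\<lambda>(a,b). f (b,a)) ab = (\<Sum>p<N-1. (-1)^p * ((\<lambda>(a,b). 1/(qd a^(N-p)* qd b^(p+2))) ab))" for ab
  proof (cases ab)
    case (Pair a b)
    show ?thesis using E_pt[OF qd_pos[of a] qd_pos[of b] N] unfolding Pair f_def
      by (simp add: add.commute)
  qed
  have rS: "((\<lambda>ab. \<Sum>p<N-1. (-1)^p * ((\<lambda>(a,b). 1/(qd a^(N-p)* qd b^(p+2))) ab)) has_sum
     (\<Sum>p<N-1. (-1)^p * (dlambda (real (N-p)) * dlambda (real (p+2))))) UNIV"
  proof (rule has_sum_sum_fun)
    fix p assume "p \<in> {..<N-1}"
    then have "N - p \<ge> 2" by auto
    then show "((\<lambda>ab. (-1)^p * ((\<lambda>(a,b). 1/(qd a^(N-p)* qd b^(p+2))) ab)) has_sum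
      ((-1)^p * (dlambda (real (N-p)) * dlambda (real (p+2))))) UNIV"
      by (intro has_sum_cmult_right lamlam) auto
  qed simp
  have "S + S = (\<Sum>p<N-1. (-1)^p * (dlambda (real (N-p)) * dlambda (real (p+2))))"
    using hS rS unfolding eq by (rule has_sum_unique)
  then have Seq: "S = (\<Sum>p<N-1. (-1)^p * (dlambda (real (N-p)) * dlambda (real (p+2)))) / 2" by simp
  show ?thesis using fS unfolding Seq f_def .
qed

lemma tel_sums:
  fixes g :: "nat \<Rightarrow> real"
  assumes g: "g \<longlonglongrightarrow> 0"
  shows "(\<lambda>n. g n - g (n + m)) sums (\<Sum>i<m. g i)"
proof -
  have s: "(\<lambda>n. g (n+i) - g (Suc (n+i))) sums (g i)" for i
  proof -
    have "(\<lambda>n. g (n+i)) \<longlonglongrightarrow> 0" using LIMSEQ_ignore_initial_segment[OF g] .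
    from telescope_sums'[OF this] show ?thesis by simp
  qed
  have "(\<lambda>n. \<Sum>i<m. g (n+i) - g (Suc (n+i))) sums (\<Sum>i<m. g i)"
    by (rule sums_sum) (rule s)
  moreover have "(\<Sum>i<m. g (n+i) - g (Suc (n+i))) = g n - g (n + m)" for n
    using sum_lessThan_telescope'[of "\<lambda>i. g (n+i)" m] by simp
  ultimately show ?thesis by simp
qed

lemma aux_K: "r \<noteq> 0 \<Longrightarrow> t \<noteq> 0 \<Longrightarrow> t - r = c \<Longrightarrow> c \<noteq> 0 \<Longrightarrow>
   1/(4*r*t) = (1/r - 1/t)/(4*(c::real))"
proof -
  assume a: "r \<noteq> 0" "t \<noteq> 0" "t - r = c" "c \<noteq> 0"
  have "1/r - 1/t = (t - r)/(r*t)" using a(1,2) by (simp add: diff_frac_eq)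
  then show ?thesis using a(1,2,4) by (simp add: a(3))
qed

lemma K_has_sum:
  "((\<lambda>b. 1/(qd b^2 - qd a^2)) has_sum (1/(4 * qd a^2))) UNIV"
proof -
  define m where "m = 2*a+1"
  define g where "g = (\<lambda>n::nat. 1/(real n - real a))"
  have g0: "g \<longlonglongrightarrow> 0"
  proof (rule LIMSEQ_offset[where k="a+1"])
    have "(\<lambda>n. g (n + (a+1))) = (\<lambda>n. inverse (real (Suc n)))"
      by (auto simp: g_def divide_inverse)
    then show "(\<lambda>n. g (n + (a+1))) \<longlonglongrightarrow> 0" using LIMSEQ_inverse_real_of_nat by simp
  qed
  have gsym: "(\<Sum>i<m. g i) = 0"
  proof -
    have "(\<Sum>i<m. g i) = (\<Sum>i<m. g (2*a - i))"
      by (rule sum.reindex_bij_witness[where i="\<lambda>i. 2*a - i" and j="\<lambda>i. 2*a - i"]) (auto simp: m_def)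
    also have "\<dots> = (\<Sum>i<m. - g i)"
      by (rule sum.cong) (auto simp: m_def g_def of_nat_diff divide_simps)
    finally show ?thesis by (simp add: sum_negf)
  qed
  define u where "u = (\<lambda>n. (g n - g (n + m)) / (4 * real m))"
  have us: "u sums 0" unfolding u_def using sums_divide[OF tel_sums[OF g0, of m], of "4 * real m"] gsym by simp
  define f where "f = (\<lambda>b. 1/(qd b^2 - qd a^2))"
  have fu: "f n = u n + (if n = a then 1/(4 * qd a^2) else 0)" for n
  proof (cases "n = a")
    case True
    then show ?thesis by (simp add: f_def u_def g_def m_def qd_def power2_eq_square field_simps)
  next
    case False
    have d: "real n - real a \<noteq> 0" using False by simp
    have d2: "real n + real a + 1 \<noteq> 0" by (simp add: add_nonneg_pos)
    have "qd n^2 - qd a^2 = 4 * (real n - real a) * (real n + real a + 1)"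
      by (simp add: qd_def power2_eq_square algebra_simps)
    moreover have "real (n + m) - real a = real n + real a + 1" by (simp add: m_def)
    moreover have "real m \<noteq> 0" "(real n + real a + 1) - (real n - real a) = real m" by (simp_all add: m_def)
    ultimately show ?thesis using False d d2 aux_K[OF d d2, of "real m"]
      by (simp add: f_def u_def g_def mult.assoc)
  qed
  have fs: "f sums (1/(4 * qd a^2))"
  proof -
    have "f = (\<lambda>n. u n + (if n = a then 1/(4 * qd a^2) else 0))" using fu by (intro ext) simp
    then show ?thesis using sums_add[OF us sums_single[of a "\<lambda>_. 1/(4 * qd a^2)"]] by simp
  qed
  have fa: "summable (\<lambda>n. norm (f n))"
  proof (rule summable_comparison_test'[OF summable_mult[OF inverse_power_summable[OF order.refl, where 'a=real], of 2], of "2*a+1"])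
    fix n :: nat assume n: "n \<ge> 2*a+1"
    have o1: "2 * qd a \<le> qd n" using n by (simp add: qd_def)
    have "(2*qd a)*(2*qd a) \<le> qd n * qd n" by (rule mult_mono[OF o1 o1]) (auto simp: less_imp_le)
    then have o2: "qd a ^2 \<le> qd n^2 / 4" by (simp add: power2_eq_square)
    have h: "real n ^ 2 \<le> qd n ^ 2" using qd_ge_n[of n] by (intro power_mono) auto
    have "n > 0" using n by simp
    have pos: "qd n^2 - qd a^2 \<ge> real n ^ 2 / 2" using o2 h zero_le_power2[of "real n"] by linarith
    have np: "real n ^ 2 / 2 > 0" using \<open>n > 0\<close> by simp
    have pp: "qd n^2 - qd a^2 > 0" using pos np by linarith
    have "norm (f n) = 1/(qd n^2 - qd a^2)" using pp by (simp add: f_def)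
    also have "\<dots> \<le> 1/(real n ^ 2 / 2)" using pos np pp by (intro divide_left_mono) (auto intro: mult_pos_pos)
    also have "\<dots> = 2 * inverse (real n ^ 2)" by (simp add: divide_simps)
    finally show "norm (norm (f n)) \<le> 2 * inverse (real n ^ 2)" by simp
  qed
  show ?thesis using norm_summable_imp_has_sum[OF fa fs] unfolding f_def .
qed

lemma aux_div: "(d::real) \<noteq> 0 \<Longrightarrow> A/(-d) + B/d = (B - A)/d"
  by (simp add: diff_divide_distrib)

lemma EC_gen:
  fixes X Y :: real
  assumes X: "X > 0" and Y: "Y > 0" and XY: "X \<noteq> Y"
  shows "(\<Sum>i<n. X^(n-i) * Y^(i+1)) = X^n/(1/Y - 1/X) + Y^n/(1/X - 1/Y)"
proof -
  have P: "Y^n - X^n = (Y - X) * (\<Sum>i<n. X^(n - Suc i) * Y^i)" by (rule power_diff_sumr2)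
  have "(\<Sum>i<n. X^(n-i) * Y^(i+1)) = X * Y * (\<Sum>i<n. X^(n - Suc i) * Y^i)"
    unfolding sum_distrib_left
  proof (rule sum.cong)
    fix i assume "i \<in> {..<n}"
    then have "n - i = Suc (n - Suc i)" by simp
    then show "X^(n-i) * Y^(i+1) = X * Y * (X^(n - Suc i) * Y^i)" by simp
  qed simp
  also have "\<dots> = X * Y * (Y^n - X^n) / (Y - X)" using XY P by simp
  also have "\<dots> = X^n/(1/Y - 1/X) + Y^n/(1/X - 1/Y)"
  proof -
    have d1: "1/Y - 1/X = (X - Y)/(X*Y)" using X Y by (simp add: diff_frac_eq)
    have d2: "1/X - 1/Y = (Y - X)/(X*Y)" using X Y by (simp add: diff_frac_eq)
    have n1: "X - Y \<noteq> 0" "Y - X \<noteq> 0" using XY by auto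
    have "X^n/(1/Y - 1/X) + Y^n/(1/X - 1/Y) = X^n * (X*Y)/(-(Y - X)) + Y^n * (X*Y)/(Y - X)"
      unfolding d1 d2 by simp
    also have "\<dots> = (Y^n * (X*Y) - X^n * (X*Y)) / (Y - X)"
      using aux_div[OF n1(2)] by simp
    also have "\<dots> = X * Y * (Y^n - X^n) / (Y - X)"
      by (simp add: algebra_simps)
    finally show ?thesis by simp
  qed
  finally show ?thesis .
qed

lemma qd_inj: "qd a = qd b \<longleftrightarrow> a = b" by (simp add: qd_def)

lemma EC_pt:
  assumes n: "n \<ge> 1"
  shows "(\<Sum>i<n. 1/(qd a^(2*(n-i)) * qd b^(2*i+2)))
     = 1/(qd a^(2*n) * (qd b^2 - qd a^2)) + 1/(qd b^(2*n) * (qd a^2 - qd b^2))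
       + (if a = b then real n / qd a^(2*n+2) else 0)"
proof (cases "a = b")
  case True
  have "(\<Sum>i<n. 1/(qd a^(2*(n-i)) * qd a^(2*i+2))) = (\<Sum>i<n. 1/qd a^(2*n+2))"
  proof (rule sum.cong)
    fix i assume "i \<in> {..<n}"
    then have "2*(n-i) + (2*i+2) = 2*n+2" by auto
    then show "1/(qd a^(2*(n-i)) * qd a^(2*i+2)) = 1/qd a^(2*n+2)" by (metis power_add)
  qed simp
  then show ?thesis using True by simp
next
  case False
  define X where "X = 1/qd a^2"
  define Y where "Y = 1/qd b^2"
  have X: "X > 0" and Y: "Y > 0" by (simp_all add: X_def Y_def)
  have XY: "X \<noteq> Y" using False unfolding X_def Y_def
    by (metis qd_inj qd_pos power2_eq_imp_eq less_imp_le divide_cancel_left one_neq_zero)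
  have px: "1/qd a^(2*k) = X^k" for k by (simp add: X_def power_mult power_one_over)
  have py: "1/qd b^(2*k) = Y^k" for k by (simp add: Y_def power_mult power_one_over)
  have "(\<Sum>i<n. 1/(qd a^(2*(n-i)) * qd b^(2*i+2))) = (\<Sum>i<n. X^(n-i) * Y^(i+1))"
  proof (rule sum.cong)
    fix i
    have "2*i+2 = 2*(i+1::nat)" by simp
    then show "1/(qd a^(2*(n-i)) * qd b^(2*i+2)) = X^(n-i) * Y^(i+1)"
      using px[of "n-i"] py[of "i+1"] by (metis times_divide_times_eq mult_1 power_mult)
  qed simp
  also have "\<dots> = X^n/(1/Y - 1/X) + Y^n/(1/X - 1/Y)" by (rule EC_gen[OF X Y XY])
  also have "\<dots> = 1/(qd a^(2*n) * (qd b^2 - qd a^2)) + 1/(qd b^(2*n) * (qd a^2 - qd b^2))"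
  proof -
    have "1/Y = qd b^2" "1/X = qd a^2" by (simp_all add: X_def Y_def)
    then show ?thesis unfolding px[symmetric] py[symmetric] by simp
  qed
  finally show ?thesis using False by simp
qed

definition Bf :: "nat \<times> nat \<Rightarrow> real" where
  "Bf = (\<lambda>(a,b). 2 * (1/(qd a^2 * qd b^2)) + (if b \<le> 2*a then 1/qd a^3 else 0))"

lemma Bf_nonneg: "Bf ab \<ge> 0" by (cases ab) (simp add: Bf_def)

lemma Bf_summable: "Bf summable_on UNIV"
proof -
  have P1: "(\<lambda>ab. 2 * (\<lambda>(a,b). 1/(qd a^2 * qd b^2)) ab) summable_on UNIV"
    by (rule summable_on_cmult_right[OF D_summable])
  have fib: "((\<lambda>b. (\<lambda>(a,b). if b \<le> 2*a then 1/qd a^3 else 0) (a,b)) has_sum (1/qd a^2)) UNIV" for a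
  proof -
    have "((\<lambda>b. if b \<le> 2*a then 1/qd a^3 else 0) has_sum (1/qd a^2)) UNIV \<longleftrightarrow>
          ((\<lambda>b. 1/qd a^3) has_sum (1/qd a^2)) {..2*a}"
      by (rule has_sum_cong_neutral) auto
    moreover have "((\<lambda>b. 1/qd a^3) has_sum (1/qd a^2)) {..2*a}"
    proof (rule has_sum_finiteI)
      have "(\<Sum>b\<le>2*a. 1/qd a^3) = qd a * (1/qd a^3)" by (simp add: qd_def)
      also have "\<dots> = 1/qd a^2" by (simp add: power3_eq_cube power2_eq_square)
      finally show "1/qd a^2 = (\<Sum>b\<le>2*a. 1/qd a^3)" by simp
    qed simp
    ultimately show ?thesis by simp
  qed
  have out: "(\<lambda>a. 1/qd a^2) summable_on UNIV"
    using lam_has_sum[of 2] by (auto simp: summable_on_def)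
  have P2: "(\<lambda>(a,b). if b \<le> 2*a then 1/qd a^3 else 0) summable_on Sigma UNIV (\<lambda>_. UNIV)"
    by (rule summable_on_SigmaI[OF fib out]) auto
  have "(\<lambda>ab. 2 * (\<lambda>(a,b). 1/(qd a^2 * qd b^2)) ab + (\<lambda>(a,b). if b \<le> 2*a then 1/qd a^3 else 0) ab) summable_on UNIV"
    using summable_on_add[OF P1 P2[simplified]] .
  moreover have "Bf = (\<lambda>ab. 2 * (\<lambda>(a,b). 1/(qd a^2 * qd b^2)) ab + (\<lambda>(a,b). if b \<le> 2*a then 1/qd a^3 else 0) ab)"
    by (auto simp: Bf_def)
  ultimately show ?thesis by simp
qed

lemma A_bound:
  assumes n: "n \<ge> 1"
  shows "\<bar>1/(qd a^(2*n) * (qd b^2 - qd a^2))\<bar> \<le> Bf (a,b)"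
proof -
  define x where "x = qd a"
  define y where "y = qd b"
  have x1: "x \<ge> 1" and y1: "y \<ge> 1" using qd_ge1 by (simp_all add: x_def y_def)
  have xn: "x^2 \<le> x^(2*n)" using x1 n by (intro power_increasing) auto
  have x2p: "x^2 > 0" using x1 by simp
  show ?thesis
  proof (cases "a = b")
    case True then show ?thesis using Bf_nonneg[of "(a,b)"] by simp
  next
    case False
    show ?thesis
    proof (cases "b \<le> 2*a")
      case True
      have d: "\<bar>y - x\<bar> \<ge> 1" using False by (auto simp: x_def y_def qd_def)
      have f: "y^2 - x^2 = (y - x) * (y + x)" by (simp add: power2_eq_square algebra_simps)
      have "\<bar>y^2 - x^2\<bar> = \<bar>y - x\<bar> * (y + x)" unfolding f using x1 y1
        by (simp add: abs_mult)
      also have "\<dots> \<ge> 1 * x" using d x1 y1 by (intro mult_mono) auto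
      finally have h: "\<bar>y^2 - x^2\<bar> \<ge> x" by simp
      have "x^2 * x \<le> x^(2*n) * \<bar>y^2 - x^2\<bar>" using xn h x1 by (intro mult_mono) auto
      moreover have "x^2 * x > 0" using x1 by simp
      ultimately have "1/(x^(2*n) * \<bar>y^2 - x^2\<bar>) \<le> 1/(x^2 * x)"
        by (intro divide_left_mono) (auto intro: mult_pos_pos)
      moreover have "x^2 * x = x^3" by (simp add: power2_eq_square power3_eq_cube)
      ultimately have "\<bar>1/(x^(2*n) * (y^2 - x^2))\<bar> \<le> 1/x^3" using x1 by (simp add: abs_mult)
      moreover have "1/x^3 \<le> Bf (a,b)" using True by (simp add: Bf_def x_def)
      ultimately show ?thesis unfolding x_def y_def by linarith
    next
      case False
      have "y \<ge> 2*x" using False by (simp add: x_def y_def qd_def)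
      then have "y^2 \<ge> (2*x)^2" using x1 by (intro power_mono) auto
      then have "y^2 \<ge> 4 * x^2" by (simp add: power2_eq_square)
      then have h: "y^2 - x^2 \<ge> y^2/2" using x2p by linarith
      have y2p: "y^2/2 > 0" using y1 by simp
      have "x^2 * (y^2/2) \<le> x^(2*n) * (y^2 - x^2)" using xn h x1 y2p by (intro mult_mono) auto
      moreover have "x^2 * (y^2/2) > 0" using x2p y2p by simp
      ultimately have "1/(x^(2*n) * (y^2 - x^2)) \<le> 1/(x^2 * (y^2/2))"
        by (intro divide_left_mono) (auto intro: mult_pos_pos)
      moreover have "1/(x^2 * (y^2/2)) = 2 * (1/(x^2*y^2))" by simp
      moreover have "1/(x^(2*n) * (y^2 - x^2)) \<ge> 0"
      proof -
        have "y^2 - x^2 > 0" using h y2p by linarith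
        moreover have "x^(2*n) > 0" using x1 by simp
        ultimately show ?thesis by simp
      qed
      ultimately have "\<bar>1/(x^(2*n) * (y^2 - x^2))\<bar> \<le> 2 * (1/(x^2*y^2))" by simp
      moreover have "2 * (1/(x^2*y^2)) \<le> Bf (a,b)" by (simp add: Bf_def x_def y_def)
      ultimately show ?thesis unfolding x_def y_def by linarith
    qed
  qed
qed

lemma EC:
  assumes n: "n \<ge> 1"
  shows "(\<Sum>i<n. dlambda (real (2*(n-i))) * dlambda (real (2*i+2))) = (2*n+1)/2 * dlambda (real (2*n+2))"
proof -
  define L where "L = dlambda (real (2*n+2))"
  define A where "A = (\<lambda>(a,b). 1/(qd a^(2*n) * (qd b^2 - qd a^2)))"
  have Asum: "A summable_on UNIV"
  proof -
    have "(\<lambda>x. norm (Bf x)) summable_on UNIV" using Bf_summable summable_on_iff_abs_summable_on_real by blast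
    then have "(\<lambda>x. norm (A x)) summable_on UNIV"
    proof (rule summable_on_comparison_test)
      fix ab :: "nat \<times> nat"
      obtain a b where ab: "ab = (a,b)" by (cases ab)
      show "0 \<le> norm (A ab)" by simp
      show "norm (A ab) \<le> norm (Bf ab)" using A_bound[OF n, of a b] Bf_nonneg[of ab]
        unfolding ab A_def by simp
    qed
    then show ?thesis using summable_on_iff_abs_summable_on_real by blast
  qed
  have fib: "((\<lambda>b. A (a,b)) has_sum (1/qd a^(2*n) * (1/(4 * qd a^2)))) UNIV" for a
    using has_sum_cmult_right[OF K_has_sum[of a], of "1/qd a^(2*n)"] by (simp add: A_def)
  have out: "((\<lambda>a. 1/qd a^(2*n) * (1/(4 * qd a^2))) has_sum (L/4)) UNIV"
  proof -
    have "((\<lambda>a. (1/4) * (1/qd a^(2*n+2))) has_sum ((1/4) * L)) UNIV"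
      unfolding L_def by (rule has_sum_cmult_right[OF lam_has_sum]) simp
    moreover have "(\<lambda>a. (1/4) * (1/qd a^(2*n+2))) = (\<lambda>a. 1/qd a^(2*n) * (1/(4 * qd a^2)))"
    proof (rule ext)
      fix a
      have "qd a^(2*n+2) = qd a^(2*n) * qd a^2" by (simp add: power_add power2_eq_square)
      then show "(1/4) * (1/qd a^(2*n+2)) = 1/qd a^(2*n) * (1/(4 * qd a^2))" by simp
    qed
    ultimately show ?thesis by simp
  qed
  have AS: "(A has_sum (L/4)) UNIV"
    using has_sum_SigmaI[where f=A and A=UNIV and B="\<lambda>_. UNIV", OF fib out] Asum by simp
  have AS': "((\<lambda>(a,b). A (b,a)) has_sum (L/4)) UNIV" by (rule swap_has_sum[OF AS])
  define Dg where "Dg = (\<lambda>(a,b). if a = b then real n / qd a^(2*n+2) else 0)"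
  have DS: "(Dg has_sum (real n * L)) UNIV"
  proof -
    have "(Dg has_sum (real n * L)) UNIV \<longleftrightarrow> (Dg has_sum (real n * L)) (range (\<lambda>a. (a,a)))"
      by (rule has_sum_cong_neutral) (auto simp: Dg_def)
    moreover have "(Dg has_sum (real n * L)) (range (\<lambda>a. (a,a))) \<longleftrightarrow> ((Dg \<circ> (\<lambda>a. (a,a))) has_sum (real n * L)) UNIV"
      by (rule has_sum_reindex) (auto simp: inj_on_def)
    moreover have "((\<lambda>a. real n * (1/qd a^(2*n+2))) has_sum (real n * L)) UNIV"
      unfolding L_def by (rule has_sum_cmult_right[OF lam_has_sum]) simp
    moreover have "(Dg \<circ> (\<lambda>a. (a,a))) = (\<lambda>a. real n * (1/qd a^(2*n+2)))"
      by (auto simp: Dg_def)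
    ultimately show ?thesis by simp
  qed
  have tot: "((\<lambda>ab. A ab + (\<lambda>(a,b). A (b,a)) ab + Dg ab) has_sum (L/4 + L/4 + real n * L)) UNIV"
    by (intro has_sum_add AS AS' DS)
  have WS: "((\<lambda>ab. \<Sum>i<n. (\<lambda>(a,b). 1/(qd a^(2*(n-i)) * qd b^(2*i+2))) ab) has_sum
        (\<Sum>i<n. dlambda (real (2*(n-i))) * dlambda (real (2*i+2)))) UNIV"
  proof (rule has_sum_sum_fun)
    fix i assume "i \<in> {..<n}"
    then show "((\<lambda>(a,b). 1/(qd a^(2*(n-i)) * qd b^(2*i+2))) has_sum
        (dlambda (real (2*(n-i))) * dlambda (real (2*i+2)))) UNIV"
      by (intro lamlam) auto
  qed simp
  have eq: "(\<Sum>i<n. (\<lambda>(a,b). 1/(qd a^(2*(n-i)) * qd b^(2*i+2))) ab) = A ab + (\<lambda>(a,b). A (b,a)) ab + Dg ab" for ab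
  proof -
    obtain a b where ab: "ab = (a,b)" by (cases ab)
    show ?thesis using EC_pt[OF n, of a b] unfolding ab A_def Dg_def by simp
  qed
  have "(\<Sum>i<n. dlambda (real (2*(n-i))) * dlambda (real (2*i+2))) = L/4 + L/4 + real n * L"
    using WS tot unfolding eq by (rule has_sum_unique)
  then show ?thesis unfolding L_def by (simp add: field_simps)
qed

lemma split_q:
  fixes f :: "nat \<Rightarrow> real"
  assumes "q \<ge> 2"
  shows "(\<Sum>i<q. f i) = f 0 + (\<Sum>i\<in>{1..q-2}. f i) + f (q-1)"
proof -
  obtain m where m: "q = Suc (Suc m)" using assms by (metis add_2_eq_Suc le_Suc_ex)
  have "(\<Sum>i<Suc m. f i) = f 0 + (\<Sum>i\<in>{1..m}. f i)"
    by (simp only: sum.lessThan_Suc_shift sum.atLeast1_atMost_eq One_nat_def)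
  then show ?thesis unfolding m by simp
qed

lemma split_p:
  fixes g :: "nat \<Rightarrow> real"
  assumes "p \<ge> 2"
  shows "(\<Sum>j<p. g j) = (\<Sum>j\<in>{0..p-2}. g j) + g (p-1)"
proof -
  obtain m where m: "p = Suc (Suc m)" using assms by (metis add_2_eq_Suc le_Suc_ex)
  show ?thesis unfolding m by (simp add: atLeast0AtMost lessThan_Suc_atMost[symmetric])
qed

lemma aux_last:
  fixes x y M :: real
  assumes "x > 0" "y > 0" "M > 0"
  shows "1/((M*x)*(x+y)) - 1/((M*x)*y) = - (1/(M*y*(x+y)))"
proof -
  have xy: "x + y > 0" using assms by simp
  have h1: "1/(x+y) - 1/y = -x/((x+y)*y)" using assms xy by (simp add: diff_frac_eq)
  have "1/((M*x)*(x+y)) - 1/((M*x)*y) = (1/(M*x))*(1/(x+y) - 1/y)" by (simp add: right_diff_distrib)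
  also have "\<dots> = (1/(M*x))*(-x/((x+y)*y))" unfolding h1 ..
  also have "\<dots> = - (1/(M*y*(x+y)))" using assms xy by (simp add: mult.commute)
  finally show ?thesis .
qed

lemma pw:
  fixes x y :: real
  assumes x: "x > 0" and y: "y > 0" and pe: "even p" and p: "p \<ge> 2" and q: "q \<ge> 2"
  shows "1/(y^p*(x+y)^q) - 1/(x^p*(x+y)^q) =
     (\<Sum>i\<in>{1..q-2}. real ((p-1+i) choose i) * (1/(x^(p+i)*(x+y)^(q-i))))
   + (\<Sum>j\<in>{0..p-2}. (-1)^j * real ((q-1+j) choose j) * (1/(x^(q+j)*y^(p-j))))
   - real ((p+q-2) choose (q-1)) * (1/(x^(p+q-2)*y*(x+y)))"
proof -
  define T where "T = (\<lambda>i. real ((p-1+i) choose i)/(x^(p+i)*(x+y)^(q-i)))"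
  define U where "U = (\<lambda>j. (-1)^j * real ((q-1+j) choose j)/(x^(q+j)*y^(p-j)))"
  have P: "1/(y^p*(x+y)^q) = (\<Sum>i<q. T i) + (\<Sum>j<p. U j)"
    unfolding T_def U_def by (rule pf[OF x y pe]) (use p q in auto)
  have C: "((p-1+(q-1)) choose (q-1)) = ((p+q-2) choose (q-1))" "((q-1+(p-1)) choose (p-1)) = ((p+q-2) choose (q-1))"
  proof -
    have a: "p-1+(q-1) = p+q-2" "q-1+(p-1) = p+q-2" using p q by simp_all
    have b: "p - 1 \<le> p+q-2" "(p+q-2) - (p-1) = q-1" using p q by simp_all
    show "((p-1+(q-1)) choose (q-1)) = ((p+q-2) choose (q-1))" unfolding a ..
    show "((q-1+(p-1)) choose (p-1)) = ((p+q-2) choose (q-1))" unfolding a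
      using binomial_symmetric[OF b(1)] b(2) by simp
  qed
  have sg: "(-1::real)^(p-1) = -1" using pe p by (simp add: minus_one_power_iff)
  define M where "M = x^(p+q-2)"
  have M: "M > 0" using x by (simp add: M_def)
  have e0: "p+(q-1) = Suc (p+q-2)" "q+(p-1) = Suc (p+q-2)" using p q by simp_all
  have e1: "x^(p+(q-1)) = M*x" "x^(q+(p-1)) = M*x" unfolding e0 by (simp_all add: M_def)
  have "T (q-1) + U (p-1) = real ((p+q-2) choose (q-1)) * (1/((M*x)*(x+y)) - 1/((M*x)*y))"
    unfolding T_def U_def C sg e1 using p q by (simp add: algebra_simps)
  also have "\<dots> = - real ((p+q-2) choose (q-1)) * (1/(x^(p+q-2)*y*(x+y)))"
    by (subst aux_last[OF x y M]) (simp add: M_def)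
  finally have TU: "T (q-1) + U (p-1) = - real ((p+q-2) choose (q-1)) * (1/(x^(p+q-2)*y*(x+y)))" .
  have T0: "T 0 = 1/(x^p*(x+y)^q)" by (simp add: T_def)
  have "1/(y^p*(x+y)^q) - 1/(x^p*(x+y)^q) = (\<Sum>i\<in>{1..q-2}. T i) + (\<Sum>j\<in>{0..p-2}. U j) + (T (q-1) + U (p-1))"
    unfolding P split_q[OF q] split_p[OF p] T0 by simp
  also have "\<dots> = (\<Sum>i\<in>{1..q-2}. real ((p-1+i) choose i) * (1/(x^(p+i)*(x+y)^(q-i))))
   + (\<Sum>j\<in>{0..p-2}. (-1)^j * real ((q-1+j) choose j) * (1/(x^(q+j)*y^(p-j))))
   - real ((p+q-2) choose (q-1)) * (1/(x^(p+q-2)*y*(x+y)))"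
    unfolding TU by (simp add: T_def U_def)
  finally show ?thesis .
qed

lemma main_sum:
  assumes pe: "even p" and p: "p \<ge> 2" and qe: "even q" and q: "q \<ge> 2"
  shows "(\<Sum>i\<in>{1..q-2}. real ((p-1+i) choose i) * (sigma_odd (q-i) (p+i) / 2^(q-i)))
   + (\<Sum>j\<in>{0..p-2}. (-1)^j * real ((q-1+j) choose j) * (dlambda (real (q+j)) * dlambda (real (p-j))))
   - real ((p+q-2) choose (q-1)) * ((\<Sum>k<(p+q-2)-1. (-1)^k * (dlambda (real ((p+q-2)-k)) * dlambda (real (k+2)))) / 2) = 0"
proof -
  define N where "N = p+q-2"
  have N: "even N" "N \<ge> 2" using pe qe p q by (auto simp: N_def)
  define F1 where "F1 = (\<lambda>(a,b). 1/(qd b^p*(qd a + qd b)^q))"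
  define F2 where "F2 = (\<lambda>(a,b). 1/(qd a^p*(qd a + qd b)^q))"
  have h2: "(F2 has_sum (sigma_odd q p / 2^q)) UNIV" unfolding F2_def by (rule sig_has_sum[OF q p])
  have h1: "(F1 has_sum (sigma_odd q p / 2^q)) UNIV"
  proof -
    have "((\<lambda>(a,b). F2 (b,a)) has_sum (sigma_odd q p / 2^q)) UNIV" by (rule swap_has_sum[OF h2])
    moreover have "(\<lambda>(a,b). F2 (b,a)) = F1" by (auto simp: F1_def F2_def add.commute)
    ultimately show ?thesis by simp
  qed
  have L: "((\<lambda>ab. F1 ab - F2 ab) has_sum 0) UNIV" using has_sum_diff[OF h1 h2] by simp
  have P1: "((\<lambda>ab. \<Sum>i\<in>{1..q-2}. real ((p-1+i) choose i) * (\<lambda>(a,b). 1/(qd a^(p+i)*(qd a + qd b)^(q-i))) ab)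
      has_sum (\<Sum>i\<in>{1..q-2}. real ((p-1+i) choose i) * (sigma_odd (q-i) (p+i) / 2^(q-i)))) UNIV"
  proof (rule has_sum_sum_fun)
    fix i assume i: "i \<in> {1..q-2}"
    show "((\<lambda>ab. real ((p-1+i) choose i) * (\<lambda>(a,b). 1/(qd a^(p+i)*(qd a + qd b)^(q-i))) ab)
      has_sum (real ((p-1+i) choose i) * (sigma_odd (q-i) (p+i) / 2^(q-i)))) UNIV"
      by (rule has_sum_cmult_right, rule sig_has_sum) (use i p in auto)
  qed simp
  have P2: "((\<lambda>ab. \<Sum>j\<in>{0..p-2}. (-1)^j * real ((q-1+j) choose j) * (\<lambda>(a,b). 1/(qd a^(q+j)*qd b^(p-j))) ab)
      has_sum (\<Sum>j\<in>{0..p-2}. (-1)^j * real ((q-1+j) choose j) * (dlambda (real (q+j)) * dlambda (real (p-j))))) UNIV"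
  proof (rule has_sum_sum_fun)
    fix j assume j: "j \<in> {0..p-2}"
    show "((\<lambda>ab. (-1)^j * real ((q-1+j) choose j) * (\<lambda>(a,b). 1/(qd a^(q+j)*qd b^(p-j))) ab)
      has_sum ((-1)^j * real ((q-1+j) choose j) * (dlambda (real (q+j)) * dlambda (real (p-j))))) UNIV"
      by (rule has_sum_cmult_right, rule lamlam) (use j p q in auto)
  qed simp
  have P3: "((\<lambda>ab. real ((p+q-2) choose (q-1)) * (\<lambda>(a,b). 1/(qd a^N*qd b*(qd a + qd b))) ab)
      has_sum (real ((p+q-2) choose (q-1)) * ((\<Sum>k<N-1. (-1)^k * (dlambda (real (N-k)) * dlambda (real (k+2)))) / 2))) UNIV"
    by (rule has_sum_cmult_right, rule E_has_sum[OF N])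
  have R: "((\<lambda>ab. (\<Sum>i\<in>{1..q-2}. real ((p-1+i) choose i) * (\<lambda>(a,b). 1/(qd a^(p+i)*(qd a + qd b)^(q-i))) ab)
      + (\<Sum>j\<in>{0..p-2}. (-1)^j * real ((q-1+j) choose j) * (\<lambda>(a,b). 1/(qd a^(q+j)*qd b^(p-j))) ab)
      - real ((p+q-2) choose (q-1)) * (\<lambda>(a,b). 1/(qd a^N*qd b*(qd a + qd b))) ab)
     has_sum ((\<Sum>i\<in>{1..q-2}. real ((p-1+i) choose i) * (sigma_odd (q-i) (p+i) / 2^(q-i)))
   + (\<Sum>j\<in>{0..p-2}. (-1)^j * real ((q-1+j) choose j) * (dlambda (real (q+j)) * dlambda (real (p-j))))
   - real ((p+q-2) choose (q-1)) * ((\<Sum>k<N-1. (-1)^k * (dlambda (real (N-k)) * dlambda (real (k+2)))) / 2))) UNIV"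
    by (intro has_sum_diff has_sum_add P1 P2 P3)
  have eq: "F1 ab - F2 ab = (\<Sum>i\<in>{1..q-2}. real ((p-1+i) choose i) * (\<lambda>(a,b). 1/(qd a^(p+i)*(qd a + qd b)^(q-i))) ab)
      + (\<Sum>j\<in>{0..p-2}. (-1)^j * real ((q-1+j) choose j) * (\<lambda>(a,b). 1/(qd a^(q+j)*qd b^(p-j))) ab)
      - real ((p+q-2) choose (q-1)) * (\<lambda>(a,b). 1/(qd a^N*qd b*(qd a + qd b))) ab" for ab
  proof -
    obtain a b where ab: "ab = (a,b)" by (cases ab)
    show ?thesis unfolding ab F1_def F2_def N_def using pw[OF qd_pos[of a] qd_pos[of b] pe p q] by simp
  qed
  have "0 = (\<Sum>i\<in>{1..q-2}. real ((p-1+i) choose i) * (sigma_odd (q-i) (p+i) / 2^(q-i)))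
   + (\<Sum>j\<in>{0..p-2}. (-1)^j * real ((q-1+j) choose j) * (dlambda (real (q+j)) * dlambda (real (p-j))))
   - real ((p+q-2) choose (q-1)) * ((\<Sum>k<N-1. (-1)^k * (dlambda (real (N-k)) * dlambda (real (k+2)))) / 2)"
    using L R unfolding eq by (rule has_sum_unique)
  then show ?thesis unfolding N_def by simp
qed

lemma split_eo:
  fixes h :: "nat \<Rightarrow> real"
  shows "(\<Sum>k<2* M+1. h k) = (\<Sum>m<M+1. h (2* m)) + (\<Sum>m<M. h (2* m+1))"
proof (induction M)
  case 0 then show ?case by simp
next
  case (Suc M)
  have "(\<Sum>k<2* Suc M+1. h k) = (\<Sum>k<2* M+1. h k) + h (2* M+1) + h (2* M+2)"
    by (simp add: numeral_2_eq_2)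
  then show ?case using Suc by (simp add: numeral_2_eq_2)
qed

lemma E_eval:
  assumes K: "K \<ge> 1"
  shows "(\<Sum>k<2* K-1. (-1)^k * (dlambda (real (2* K-k)) * dlambda (real (k+2))))
     = (2* K+1)/2 * dlambda (real (2* K+2)) - (\<Sum>m<K-1. dlambda (real (2* m+3)) * dlambda (real (2* K-2* m-1)))"
proof -
  define h where "h = (\<lambda>k. (-1)^k * (dlambda (real (2* K-k)) * dlambda (real (k+2))))"
  have s: "2* K-1 = 2*(K-1)+1" "K-1+1 = K" using K by auto
  have "(\<Sum>k<2* K-1. h k) = (\<Sum>m<K. h (2* m)) + (\<Sum>m<K-1. h (2* m+1))"
    unfolding s(1) split_eo s(2) ..
  moreover have "(\<Sum>m<K. h (2* m)) = (\<Sum>i<K. dlambda (real (2*(K-i))) * dlambda (real (2* i+2)))"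
  proof (rule sum.cong)
    fix m assume "m \<in> {..<K}"
    then have "2* K - 2* m = 2*(K-m)" by simp
    then show "h (2* m) = dlambda (real (2*(K-m))) * dlambda (real (2* m+2))" by (simp add: h_def)
  qed simp
  moreover have "(\<Sum>m<K-1. h (2* m+1)) = - (\<Sum>m<K-1. dlambda (real (2* m+3)) * dlambda (real (2* K-2* m-1)))"
    unfolding sum_negf[symmetric]
  proof (rule sum.cong)
    fix m assume "m \<in> {..<K-1}"
    then have "2* K - (2* m+1) = 2* K-2* m-1" "2* m+1+2 = 2* m+3" by auto
    then show "h (2* m+1) = - (dlambda (real (2* m+3)) * dlambda (real (2* K-2* m-1)))"
      by (simp add: h_def add.commute)
  qed simp
  ultimately show ?thesis using EC[OF K] unfolding h_def by simp
qed

theorem mainTheorem12: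
  fixes v r :: nat
  assumes "v \<ge> 1" and "r \<ge> 1"
  shows "(\<Sum>i=1..2 * v-2. 2 ^ (i-1) * real ((2 * r+i-1) choose i) * sigma_odd (2 * v-i) (2 * r+i))
       + 2 ^ (2 * v-1) * (\<Sum>j=0..2 * r-2. (-1) ^ j * real ((2 * v+j-1) choose j)
             * dlambda (real (2 * v+j)) * dlambda (real (2 * r-j)))
       - (2::real) powi (2 * int v - 3) * real ((2 * v+2 * r-2) choose (2 * v-1)) * real (2 * v+2 * r-1)
             * dlambda (real (2 * v+2 * r))
       + 2 ^ (2 * v-2) * real ((2 * v+2 * r-2) choose (2 * v-1))
             * (\<Sum>j=1..r+v-2. dlambda (real (2 * j+1)) * dlambda (real (2 * r+2 * v-2 * j-1)))
       = 0"
proof -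
  have v: "v \<ge> 1" and r: "r \<ge> 1" using assms by auto
  define K where "K = r + v - 1"
  have K: "K \<ge> 1" using v r by (simp add: K_def)
  have NK: "2* r+2* v-2 = 2* K" using v r by (simp add: K_def)
  define Sg where "Sg = (\<Sum>i\<in>{1..2* v-2}. real ((2* r-1+i) choose i) * (sigma_odd (2* v-i) (2* r+i) / 2^(2* v-i)))"
  define Sl where "Sl = (\<Sum>j\<in>{0..2* r-2}. (-1)^j * real ((2* v-1+j) choose j) * (dlambda (real (2* v+j)) * dlambda (real (2* r-j))))"
  define Cc where "Cc = real ((2* r+2* v-2) choose (2* v-1))"
  define L where "L = dlambda (real (2* v+2* r))"
  define So where "So = (\<Sum>j=1..r+v-2. dlambda (real (2 * j+1)) * dlambda (real (2 * r+2 * v-2 * j-1)))"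
  have So2: "So = (\<Sum>m<K-1. dlambda (real (2* m+3)) * dlambda (real (2* K-2* m-1)))"
  proof -
    have "r + v - 2 = K - 1" by (simp add: K_def)
    then have "So = (\<Sum>m<K-1. dlambda (real (2 * Suc m+1)) * dlambda (real (2 * r+2 * v-2 * Suc m-1)))"
      unfolding So_def by (simp only: sum.atLeast1_atMost_eq One_nat_def)
    also have "\<dots> = (\<Sum>m<K-1. dlambda (real (2* m+3)) * dlambda (real (2* K-2* m-1)))"
    proof (rule sum.cong)
      fix m assume "m \<in> {..<K-1}"
      then have "2 * r+2 * v-2 * Suc m-1 = 2* K-2* m-1" "2 * Suc m+1 = 2* m+3" by (auto simp: K_def)
      then show "dlambda (real (2 * Suc m+1)) * dlambda (real (2 * r+2 * v-2 * Suc m-1)) =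
        dlambda (real (2* m+3)) * dlambda (real (2* K-2* m-1))" by (simp add: add.commute)
    qed simp
    finally show ?thesis .
  qed
  have A0: "Sg + Sl - Cc * ((\<Sum>k<2* K-1. (-1)^k * (dlambda (real (2* K-k)) * dlambda (real (k+2)))) / 2) = 0"
  proof -
    have "Sg + Sl - Cc * ((\<Sum>k<(2* r+2* v-2)-1. (-1)^k * (dlambda (real ((2* r+2* v-2)-k)) * dlambda (real (k+2)))) / 2) = 0"
      unfolding Sg_def Sl_def Cc_def using main_sum[of "2* r" "2* v"] v r by simp
    then show ?thesis by (simp only: NK)
  qed
  have Lk: "dlambda (real (2* K+2)) = L"
  proof -
    have "2* K+2 = 2* v+2* r" using v r by (simp add: K_def)
    then show ?thesis unfolding L_def by simp
  qed
  have Ev: "(\<Sum>k<2* K-1. (-1)^k * (dlambda (real (2* K-k)) * dlambda (real (k+2)))) = (2 * real K + 1)/2 * L - So"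
    using E_eval[OF K] unfolding So2[symmetric] Lk .
  have MS: "Sg + Sl - Cc * (((2 * real K + 1)/2 * L - So)/2) = 0"
    using A0 unfolding Ev .
  have G1: "(\<Sum>i=1..2 * v-2. 2 ^ (i-1) * real ((2 * r+i-1) choose i) * sigma_odd (2 * v-i) (2 * r+i)) = 2^(2* v-1) * Sg"
    unfolding Sg_def sum_distrib_left
  proof (rule sum.cong)
    fix i assume i: "i \<in> {1..2* v-2}"
    then have e: "2* v-1 = (i-1) + (2* v-i)" "2* r+i-1 = 2* r-1+i" using r by auto
    have "(2::real)^(2* v-1) = 2^(i-1) * 2^(2* v-i)" unfolding e(1) by (simp add: power_add)
    then show "2 ^ (i-1) * real ((2 * r+i-1) choose i) * sigma_odd (2 * v-i) (2 * r+i) =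
       2^(2* v-1) * (real ((2* r-1+i) choose i) * (sigma_odd (2* v-i) (2* r+i) / 2^(2* v-i)))"
      unfolding e(2) by simp
  qed simp
  have G2: "(\<Sum>j=0..2 * r-2. (-1) ^ j * real ((2 * v+j-1) choose j) * dlambda (real (2 * v+j)) * dlambda (real (2 * r-j))) = Sl"
    unfolding Sl_def
  proof (rule sum.cong)
    fix j assume "j \<in> {0..2* r-2}"
    have "2* v+j-1 = 2* v-1+j" using v by simp
    then show "(-1) ^ j * real ((2 * v+j-1) choose j) * dlambda (real (2 * v+j)) * dlambda (real (2 * r-j)) =
      (-1)^j * real ((2* v-1+j) choose j) * (dlambda (real (2* v+j)) * dlambda (real (2* r-j)))" by simp
  qed simp
  have G3: "(2::real) powi (2 * int v - 3) = 2^(2* v-1) / 4"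
  proof -
    have e: "2 * int v - 3 = int (2* v-1) - 2" using v by simp
    have "(2::real) powi (2 * int v - 3) = 2 powi (int (2* v-1) - 2)" by (simp only: e)
    also have "\<dots> = 2 powi int (2* v-1) / 2 powi 2" by (rule power_int_diff) simp
    also have "\<dots> = 2^(2* v-1) / 4" by (simp only: power_int_of_nat) simp
    finally show ?thesis .
  qed
  have G4: "(2::real)^(2* v-2) = 2^(2* v-1)/2"
  proof -
    have "2* v-1 = Suc (2* v-2)" using v by simp
    then show ?thesis by simp
  qed
  have G5: "real (2 * v+2 * r-1) = 2 * real K+1" "(2 * v+2 * r-2) = 2* r+2* v-2" using v r by (auto simp: K_def)
  have "2^(2* v-1) * (Sg + Sl - Cc * (((2 * real K + 1)/2 * L - So)/2)) = 0" using MS by simp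
  then show ?thesis
    unfolding G1 G2 G3 G4 G5 So_def[symmetric] L_def[symmetric] Cc_def[symmetric]
    by (simp add: algebra_simps)
qed

end
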